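(* For all integers $m\ge0$ and $k\ge0$, \[ \sum_{i=0}^{2k}(-1)^i\binom{m+k+i}{m+k-i}\binom{m+3k-i}{m-k+i}=(-1)^k\sum_{i=0}^{m}\binom{2k}{m-i}\binom{4k+i}{i}. \]
   Context: Binomial coefficients $\binom{a}{b}$ with integer $a\ge0$ are taken to be $0$ when $b<0$ or $b>a$. *)

theory Defs
  imports Main
begin

definition ibinom :: "int \<Rightarrow> int \<Rightarrow> int" where
  "ibinom a b = (if 0 \<le> b \<and> b \<le> a then int (nat a choose nat b) else 0)"

end

theory Submission imports Defs "HOL-Computational_Algebra.Formal_Power_Series" begin
unbundle fps_syntax

definition f :: "nat \<Rightarrow> nat \<Rightarrow> int" where "f a i = int ((a+i) choose (2*i))"

lemma f_rec: "f (Suc (Suc a)) i = 2 * f (Suc a) i + (if i = 0 then 0 else f (Suc a) (i - 1)) - f a i"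
proof (cases i)
  case 0 then show ?thesis by (simp add: f_def)
next
  case (Suc j)
  have e1: "Suc (Suc a) + Suc j = Suc (Suc (Suc (a+j)))" by simp
  have e2: "Suc a + Suc j = Suc (Suc (a+j))" by simp
  have e3: "a + Suc j = Suc (a+j)" by simp
  have e4: "Suc a + j = Suc (a+j)" by simp
  have e5: "2 * Suc j = Suc (Suc (2*j))" by simp
  show ?thesis unfolding Suc f_def e1 e2 e3 e4 e5
    by simp
qed

lemma f_zero: "a < i \<Longrightarrow> f a i = 0"
  by (simp add: f_def)

lemma num_mult_nth: "(numeral k * (g :: int fps)) $ n = numeral k * g $ n"
  by (simp add: numeral_fps_const)

definition F :: "nat \<Rightarrow> int fps" where "F a = Abs_fps (\<lambda>i. f a i)"
definition Fm :: "nat \<Rightarrow> int fps" where "Fm a = Abs_fps (\<lambda>i. (-1)^i * f a i)"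

lemma F_rec: "F (Suc (Suc a)) = (2 + fps_X) * F (Suc a) - F a"
  by (rule fps_ext) (simp add: F_def distrib_right f_rec num_mult_nth)

lemma Fm_rec: "Fm (Suc (Suc a)) = (2 - fps_X) * Fm (Suc a) - Fm a"
proof (rule fps_ext)
  fix n
  show "Fm (Suc (Suc a)) $ n = ((2 - fps_X) * Fm (Suc a) - Fm a) $ n"
    by (cases n) (simp_all add: Fm_def left_diff_distrib f_rec num_mult_nth algebra_simps)
qed

definition G :: "nat \<Rightarrow> int fps" where "G a = Fm a * F a"

lemma G_rec: "G (Suc (Suc (Suc (Suc a)))) = 4 * G (Suc (Suc (Suc a))) - fps_X^2 * G (Suc (Suc (Suc a)))
   - 6 * G (Suc (Suc a)) - 2 * (fps_X^2 * G (Suc (Suc a))) + 4 * G (Suc a) - fps_X^2 * G (Suc a) - G a"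
  unfolding G_def F_rec Fm_rec by algebra

lemma G_nth: "G a $ n = (\<Sum>i=0..n. (-1)^i * f a i * f a (n - i))"
  by (simp add: G_def fps_mult_nth F_def Fm_def)

definition co :: "int fps \<Rightarrow> int \<Rightarrow> int" where "co B z = (if z < 0 then 0 else B $ nat z)"

lemma co_add: "co (B + C) z = co B z + co C z" by (simp add: co_def)
lemma co_diff: "co (B - C) z = co B z - co C z" by (simp add: co_def)
lemma co_num: "co (numeral k * B) z = numeral k * co B z" by (simp add: co_def num_mult_nth)
lemma co_X: "co (fps_X * B) z = co B (z - 1)"
  by (auto simp: co_def nat_diff_distrib)
lemma co_X2: "co (fps_X^2 * B) z = co B (z - 2)"
  by (simp add: power2_eq_square mult.assoc co_X)

definition c :: "nat \<Rightarrow> int \<Rightarrow> int" where "c a k = co (G a) (2*k)"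

lemma c_rec: "c (Suc (Suc (Suc (Suc a)))) k = 4 * c (Suc (Suc (Suc a))) k - c (Suc (Suc (Suc a))) (k-1)
   - 6 * c (Suc (Suc a)) k - 2 * c (Suc (Suc a)) (k-1) + 4 * c (Suc a) k - c (Suc a) (k-1) - c a k"
proof -
  have e: "2 * (k - 1) = 2 * k - 2" by simp
  show ?thesis unfolding c_def e
    by (subst G_rec) (simp only: co_add co_diff co_num co_X2)
qed


definition E :: "nat \<Rightarrow> int fps" where "E n = Abs_fps (\<lambda>i. int ((n+i) choose i))"
definition Bn :: "nat \<Rightarrow> int fps" where "Bn n = Abs_fps (\<lambda>i. int (n choose i))"

lemma E_rec: "(1 - fps_X) * E (Suc n) = E n"
proof (rule fps_ext)
  fix i show "((1 - fps_X) * E (Suc n)) $ i = E n $ i"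
  proof (cases i)
    case 0 then show ?thesis by (simp add: E_def left_diff_distrib)
  next
    case (Suc j)
    have "Suc n + Suc j = Suc (n + Suc j)" "n + Suc j = Suc (n+j)" "Suc n + j = Suc (n+j)" by simp_all
    then show ?thesis using Suc by (simp add: E_def left_diff_distrib)
  qed
qed

lemma Bn_rec: "(1 + fps_X) * Bn n = Bn (Suc n)"
proof (rule fps_ext)
  fix i show "((1 + fps_X) * Bn n) $ i = Bn (Suc n) $ i"
    by (cases i) (simp_all add: Bn_def distrib_right)
qed

definition A :: "nat \<Rightarrow> int fps" where "A k = E (4*k) * Bn (2*k)"

lemma A_rec: "(1 - fps_X)^4 * A (Suc L) = (1 + fps_X)^2 * A L"
proof -
  have h1: "(1 - fps_X)^4 * E (4 * Suc L) = E (4*L)"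
  proof -
    have "4 * Suc L = Suc (Suc (Suc (Suc (4*L))))" by simp
    then have "(1 - fps_X)^4 * E (4 * Suc L) = (1 - fps_X) * ((1 - fps_X) * ((1 - fps_X) * ((1 - fps_X) * E (Suc (Suc (Suc (Suc (4*L))))))))"
      by (simp only: power4_eq_xxxx mult.assoc)
    then show ?thesis by (simp only: E_rec)
  qed
  have h2: "Bn (2 * Suc L) = (1 + fps_X)^2 * Bn (2*L)"
  proof -
    have "2 * Suc L = Suc (Suc (2*L))" by simp
    then show ?thesis by (simp add: power2_eq_square mult.assoc Bn_rec)
  qed
  have "(1 - fps_X)^4 * A (Suc L) = ((1 - fps_X)^4 * E (4 * Suc L)) * Bn (2 * Suc L)"
    by (simp only: A_def mult.assoc)
  also have "\<dots> = E (4*L) * ((1 + fps_X)^2 * Bn (2*L))" using h1 h2 by simp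
  also have "\<dots> = (1 + fps_X)^2 * A L" by (simp only: A_def mult.left_commute)
  finally show ?thesis .
qed

lemma A_nth: "A k $ n = (\<Sum>i=0..n. int ((4*k+i) choose i) * int ((2*k) choose (n - i)))"
  by (simp add: A_def fps_mult_nth E_def Bn_def)

lemma co_1mX: "co ((1 - fps_X) * B) z = co B z - co B (z - 1)"
  by (simp add: left_diff_distrib co_diff co_X)
lemma co_1pX: "co ((1 + fps_X) * B) z = co B z + co B (z - 1)"
  by (simp add: distrib_right co_add co_X)

lemma co_A_rel: "co (A (Suc L)) z - 4 * co (A (Suc L)) (z-1) + 6 * co (A (Suc L)) (z-2)
   - 4 * co (A (Suc L)) (z-3) + co (A (Suc L)) (z-4) = co (A L) z + 2 * co (A L) (z-1) + co (A L) (z-2)"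
proof -
  have "co ((1 - fps_X)^4 * A (Suc L)) z = co ((1 + fps_X)^2 * A L) z" by (simp only: A_rec)
  then show ?thesis
    apply (simp only: power4_eq_xxxx power2_eq_square mult.assoc co_1mX co_1pX)
    by (simp add: algebra_simps)
qed

definition r :: "nat \<Rightarrow> int \<Rightarrow> int" where
  "r a k = (if k < 0 then 0 else (-1)^nat k * co (A (nat k)) (int a - k))"

lemma r_rec: "r (Suc (Suc (Suc (Suc a)))) k = 4 * r (Suc (Suc (Suc a))) k - r (Suc (Suc (Suc a))) (k-1)
   - 6 * r (Suc (Suc a)) k - 2 * r (Suc (Suc a)) (k-1) + 4 * r (Suc a) k - r (Suc a) (k-1) - r a k"
proof (cases "k < 0")
  case True then show ?thesis by (simp add: r_def)
next
  case False
  show ?thesis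
  proof (cases "k = 0")
    case True
    have "co (A 0) (int b) = 1" for b
    proof -
      have "co (A 0) (int b) = (\<Sum>i=0..b. int (0 choose (b - i)))"
        by (simp add: co_def A_nth)
      also have "\<dots> = (\<Sum>i=0..b. if i = b then 1 else 0)"
        by (rule sum.cong) auto
      finally show ?thesis by simp
    qed
    then have h0: "co (A 0) z = 1" if "z \<ge> 0" for z
    proof -
      obtain b where "z = int b" using \<open>z \<ge> 0\<close> nonneg_int_cases by blast
      then show ?thesis using \<open>\<And>b. co (A 0) (int b) = 1\<close> by simp
    qed
    have "r (Suc (Suc (Suc (Suc a)))) 0 = 1" "r (Suc (Suc (Suc a))) 0 = 1" "r (Suc (Suc a)) 0 = 1"
      "r (Suc a) 0 = 1" "r a 0 = 1" "r b (-1) = 0" for b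
      by (simp_all add: r_def h0)
    then show ?thesis using True by simp
  next
    case False
    have "k = int (Suc (nat k - 1))" using False \<open>\<not> k < 0\<close> by simp
    then obtain L where L: "k = int (Suc L)" by blast
    define z where "z = int a + 4 - k"
    have rel: "co (A (Suc L)) z - 4 * co (A (Suc L)) (z-1) + 6 * co (A (Suc L)) (z-2)
      - 4 * co (A (Suc L)) (z-3) + co (A (Suc L)) (z-4) = co (A L) z + 2 * co (A L) (z-1) + co (A L) (z-2)"
      by (rule co_A_rel)
    have n1: "nat k = Suc L" "nat (k - 1) = L" "\<not> k - 1 < 0" "\<not> k < 0" using L by auto
    have s: "(-1::int) ^ Suc L = - ((-1) ^ L)" by simp
    have z1: "int (Suc (Suc (Suc (Suc a)))) - k = z" "int (Suc (Suc (Suc a))) - k = z - 1"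
       "int (Suc (Suc a)) - k = z - 2" "int (Suc a) - k = z - 3" "int a - k = z - 4"
       "int (Suc (Suc (Suc a))) - (k - 1) = z" "int (Suc (Suc a)) - (k - 1) = z - 1"
       "int (Suc a) - (k - 1) = z - 2" unfolding z_def by simp_all
    have k1: "\<not> k < 1" using L by simp
    show ?thesis unfolding r_def n1 z1 if_False s
      using arg_cong[OF rel, of "\<lambda>t. (-1::int)^L * t"] k1 n1 by (simp add: algebra_simps)
  qed
qed


lemma c_nat: "c a (int K) = (\<Sum>i=0..2*K. (-1)^i * f a i * f a (2*K - i))"
  by (simp add: c_def co_def G_nth nat_mult_distrib)

lemma r_nat: assumes "K \<le> a" shows "r a (int K) = (-1)^K * (\<Sum>i=0..a-K. int ((4*K+i) choose i) * int ((2*K) choose (a - K - i)))"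
proof -
  have eq: "int a - int K = int (a - K)" using assms by simp
  show ?thesis unfolding r_def co_def eq by (simp add: A_nth)
qed

lemma c_neg: "k < 0 \<Longrightarrow> c a k = 0" by (simp add: c_def co_def)
lemma r_neg: "k < 0 \<Longrightarrow> r a k = 0" by (simp add: r_def)
lemma r_big: "int a < k \<Longrightarrow> r a k = 0" by (simp add: r_def co_def)
lemma c_big: assumes "int a < k" shows "c a k = 0"
proof -
  have "k = int (nat k)" "a < nat k" using assms by auto
  then obtain K where K: "k = int K" "a < K" by blast
  have "c a k = (\<Sum>i=0..2*K. (-1)^i * f a i * f a (2*K - i))" using K c_nat by simp
  also have "\<dots> = 0"
  proof (rule sum.neutral, rule ballI)
    fix i assume "i \<in> {0..2*K}"
    show "(-1)^i * f a i * f a (2*K - i) = 0"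
    proof (cases "a < i")
      case True then show ?thesis by (simp add: f_zero)
    next
      case False then have "a < 2*K - i" using K by linarith
      then show ?thesis by (simp add: f_zero)
    qed
  qed
  finally show ?thesis .
qed

lemma base: assumes "a \<le> 3" shows "c a k = r a k"
proof (cases "k < 0")
  case True then show ?thesis by (simp add: c_neg r_neg)
next
  case False
  show ?thesis
  proof (cases "int a < k")
    case True then show ?thesis by (simp add: c_big r_big)
  next
    case False
    have "k = int (nat k)" "nat k \<le> a" using False \<open>\<not> k < 0\<close> by auto
    then obtain K where K: "k = int K" "K \<le> a" by blast
    have "a = 0 \<or> a = 1 \<or> a = 2 \<or> a = 3" using assms by auto
    moreover have "K = 0 \<or> K = 1 \<or> K = 2 \<or> K = 3" using assms K by auto
    ultimately show ?thesis using K c_nat[of a K] r_nat[of K a]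
      by (auto simp: f_def numeral_eq_Suc)
  qed
qed

lemma all_eq: "c n k = r n k \<and> c (Suc n) k = r (Suc n) k \<and> c (Suc (Suc n)) k = r (Suc (Suc n)) k
   \<and> c (Suc (Suc (Suc n))) k = r (Suc (Suc (Suc n))) k"
proof (induction n arbitrary: k)
  case 0 then show ?case by (simp add: base)
next
  case (Suc n)
  show ?case using Suc.IH[of k] Suc.IH[of "k-1"] c_rec[of n k] r_rec[of n k] by simp
qed


lemma ib: "ibinom (int a + int i) (int a - int i) = f a i"
proof (cases "i \<le> a")
  case True
  have e1: "nat (int a + int i) = a + i" "nat (int a - int i) = a - i" using True by auto
  have "(a + i) choose (a - i) = (a+i) choose (a + i - (a - i))"
    by (rule binomial_symmetric) simp
  moreover have "a + i - (a - i) = 2 * i" using True by simp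
  ultimately show ?thesis using True unfolding ibinom_def f_def e1 by simp
next
  case False then show ?thesis by (simp add: ibinom_def f_zero)
qed

lemma ib2: "ibinom (int n) (int j) = int (n choose j)"
  by (simp add: ibinom_def)

theorem mainTheorem11:
  fixes m k :: int
  assumes "m \<ge> 0" and "k \<ge> 0"
  shows "(\<Sum>i = 0..2*k. (-1) ^ nat i * ibinom (m+k+i) (m+k-i) * ibinom (m+3*k-i) (m-k+i))
       = (-1) ^ nat k * (\<Sum>i = 0..m. ibinom (2*k) (m-i) * ibinom (4*k+i) i)"
proof -
  obtain M where M: "m = int M" using assms(1) nonneg_int_cases by blast
  obtain K where K: "k = int K" using assms(2) nonneg_int_cases by blast
  have L: "(\<Sum>i = 0..2*k. (-1) ^ nat i * ibinom (m+k+i) (m+k-i) * ibinom (m+3*k-i) (m-k+i))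
     = (\<Sum>i=0..2*K. (-1)^i * f (M+K) i * f (M+K) (2*K - i))"
  proof -
    have "{0..2*k} = int ` {0..2*K}" using K by (simp add: image_int_atLeastAtMost)
    then have "(\<Sum>i = 0..2*k. (-1) ^ nat i * ibinom (m+k+i) (m+k-i) * ibinom (m+3*k-i) (m-k+i))
       = (\<Sum>i\<in>{0..2*K}. (-1) ^ nat (int i) * ibinom (m+k+int i) (m+k-int i) * ibinom (m+3*k-int i) (m-k+int i))"
      by (simp add: sum.reindex)
    also have "\<dots> = (\<Sum>i=0..2*K. (-1)^i * f (M+K) i * f (M+K) (2*K - i))"
    proof (rule sum.cong)
      fix i assume "i \<in> {0..2*K}"
      then have i: "i \<le> 2*K" by simp
      have e1: "m+k+int i = int (M+K) + int i" "m+k-int i = int (M+K) - int i" using M K by simp_all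
      have e2: "m+3*k-int i = int (M+K) + int (2*K - i)" "m-k+int i = int (M+K) - int (2*K - i)"
        using M K i by (simp_all add: of_nat_diff)
      show "(-1) ^ nat (int i) * ibinom (m+k+int i) (m+k-int i) * ibinom (m+3*k-int i) (m-k+int i)
         = (-1)^i * f (M+K) i * f (M+K) (2*K - i)"
        unfolding e1 e2 ib by simp
    qed simp
    finally show ?thesis .
  qed
  have R: "(\<Sum>i = 0..m. ibinom (2*k) (m-i) * ibinom (4*k+i) i)
     = (\<Sum>i=0..M. int ((4*K+i) choose i) * int ((2*K) choose (M - i)))"
  proof -
    have "{0..m} = int ` {0..M}" using M by (simp add: image_int_atLeastAtMost)
    then have "(\<Sum>i = 0..m. ibinom (2*k) (m-i) * ibinom (4*k+i) i)
       = (\<Sum>i\<in>{0..M}. ibinom (2*k) (m-int i) * ibinom (4*k+int i) (int i))"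
      by (simp add: sum.reindex)
    also have "\<dots> = (\<Sum>i=0..M. int ((4*K+i) choose i) * int ((2*K) choose (M - i)))"
    proof (rule sum.cong)
      fix i assume "i \<in> {0..M}"
      then have i: "i \<le> M" by simp
      have e: "2*k = int (2*K)" "m - int i = int (M - i)" "4*k + int i = int (4*K+i)"
        using M K i by (simp_all add: of_nat_diff)
      show "ibinom (2*k) (m-int i) * ibinom (4*k+int i) (int i) = int ((4*K+i) choose i) * int ((2*K) choose (M - i))"
        unfolding e ib2 by simp
    qed simp
    finally show ?thesis .
  qed
  have "c (M+K) (int K) = r (M+K) (int K)" using all_eq by blast
  moreover have "c (M+K) (int K) = (\<Sum>i=0..2*K. (-1)^i * f (M+K) i * f (M+K) (2*K - i))" by (rule c_nat)
  moreover have "r (M+K) (int K) = (-1)^K * (\<Sum>i=0..M. int ((4*K+i) choose i) * int ((2*K) choose (M - i)))"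
    using r_nat[of K "M+K"] by simp
  ultimately show ?thesis unfolding L R using K by simp
qed

end
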